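(* Let $G=(V,E)$ be a connected graph with root $r\in V$, vertex probabilities $p_v\in[0,1]$ with $p_r=0$ and $\sum_{v\in V}p_v=1$, and edge lengths $\lambda_e>0$, and let $n=|V\setminus\{r\}|$. Let $\varepsilon>0$ and let $T^{\mathrm{s}}$ be the tree returned by the parametric search (described in the context) run with parameter $\varepsilon$. Then $$\rho^\star\le (1+\varepsilon)\Bigl(2-\tfrac1n\Bigr)\,\rho(T^{\mathrm{s}}),$$ where $\rho^\star=\max_{T\in\mathcal T(G)}\rho(T)$ is the maximum density.
   Context: Notation: for $V'\subseteq V$, $p(V')=\sum_{v\in V'}p_v$; for $E'\subseteq E$, $\lambda(E')=\sum_{e\in E'}\lambda_e$. $\mathcal T(G)$ is the set of subtrees of $G$ containing the root $r$; for $T\in\mathcal T(G)$, $p(T)=p(V[T])$ and $\lambda(T)=\lambda(E[T])$, and for $\lambda(T)>0$ the (search) density is $\rho(T)=p(T)/\lambda(T)$. The maximum density subtree problem asks for $T\in\mathcal T(G)$ maximizing $\rho(T)$. Prize-collecting Steiner tree (PCST) problem: given $G$, root $r$, edge lengths $(\ell_e)$ and vertex penalties $(p_v)$, find $T\in\mathcal T(G)$ minimizing $\ell(T)+p(V\setminus V[T])$. The GW algorithm is the Goemans–Williamson primal-dual algorithm for PCST; it returns a tree $T\in\mathcal T(G)$ satisfying $\ell(T)+(2-\frac1n)p(V\setminus V[T])\le(2-\frac1n)(\ell(T')+p(V\setminus V[T']))$ for every $T'\in\mathcal T(G)$. Parametric search with parameter $\varepsilon>0$: (1) take an arbitrary $T^{\mathrm{s}}\in\mathcal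 T(G)$ (with $\lambda(T^{\mathrm s})>0$), set $\alpha\gets(2-\frac1n)p(T^{\mathrm{s}})/\lambda(T^{\mathrm{s}})$ and $\beta\gets\max\{p_v/\lambda_{\{v,w\}}:\{v,w\}\in E\}$; (2) while $\beta>(1+\varepsilon)\alpha$: set $\rho\gets(\alpha+\beta)/2$; let $T$ be the tree returned by the GW algorithm on $G$ with edge lengths $(\rho\lambda_e)_{e\in E}$ and penalties $(p_v)_{v\in V}$; if $(2-\frac1n)p(T)\le\rho\lambda(T)$ set $\beta\gets\rho$, otherwise set $\alpha\gets(2-\frac1n)\rho(T)$ and $T^{\mathrm{s}}\gets T$; (3) return $T^{\mathrm{s}}$. *)

theory Defs
  imports Complex_Main
begin

definition simple_graph :: "'a set \<Rightarrow> 'a set set \<Rightarrow> bool" where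
  "simple_graph V E \<longleftrightarrow> finite V \<and>
     (\<forall>e\<in>E. \<exists>u v. e = {u, v} \<and> u \<noteq> v \<and> u \<in> V \<and> v \<in> V)"

definition adj_rel :: "'a set set \<Rightarrow> ('a \<times> 'a) set" where
  "adj_rel E = {(x, y). {x, y} \<in> E}"

definition connected_graph :: "'a set \<Rightarrow> 'a set set \<Rightarrow> bool" where
  "connected_graph V E \<longleftrightarrow> simple_graph V E \<and> V \<noteq> {} \<and>
     (\<forall>u\<in>V. \<forall>v\<in>V. (u, v) \<in> (adj_rel E)\<^sup>*)"

definition is_tree :: "'a set \<Rightarrow> 'a set set \<Rightarrow> bool" where
  "is_tree VT ET \<longleftrightarrow> connected_graph VT ET \<and> card ET = card VT - 1"

definition rooted_subtrees :: "'a set \<Rightarrow> 'a set set \<Rightarrow> 'a \<Rightarrow> ('a set \<times> 'a set set) set" where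
  "rooted_subtrees V E r = {(VT, ET). VT \<subseteq> V \<and> ET \<subseteq> E \<and> r \<in> VT \<and> is_tree VT ET}"

definition tp :: "('a \<Rightarrow> real) \<Rightarrow> ('a set \<times> 'a set set) \<Rightarrow> real" where
  "tp p T = (\<Sum>v\<in>fst T. p v)"

definition tlen :: "('a set \<Rightarrow> real) \<Rightarrow> ('a set \<times> 'a set set) \<Rightarrow> real" where
  "tlen lam T = (\<Sum>e\<in>snd T. lam e)"

definition density :: "('a \<Rightarrow> real) \<Rightarrow> ('a set \<Rightarrow> real) \<Rightarrow> ('a set \<times> 'a set set) \<Rightarrow> real" where
  "density p lam T = tp p T / tlen lam T"

definition max_density :: "'a set \<Rightarrow> 'a set set \<Rightarrow> 'a \<Rightarrow> ('a \<Rightarrow> real) \<Rightarrow> ('a set \<Rightarrow> real) \<Rightarrow> real" where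
  "max_density V E r p lam =
     Max {density p lam T | T. T \<in> rooted_subtrees V E r \<and> tlen lam T > 0}"

text \<open>Guarantee of the GW algorithm, as an oracle \<open>gw\<close> mapping edge lengths to a
  rooted subtree (penalties p fixed), with \<open>c = 2 - 1/n\<close>.\<close>

definition gw_guarantee ::
  "'a set \<Rightarrow> 'a set set \<Rightarrow> 'a \<Rightarrow> ('a \<Rightarrow> real) \<Rightarrow> real \<Rightarrow>
   (('a set \<Rightarrow> real) \<Rightarrow> ('a set \<times> 'a set set)) \<Rightarrow> bool" where
  "gw_guarantee V E r p c gw \<longleftrightarrow>
     (\<forall>len. (\<forall>e\<in>E. len e > 0) \<longrightarrow>
        gw len \<in> rooted_subtrees V E r \<and>
        (\<forall>T'\<in>rooted_subtrees V E r.
           tlen len (gw len) + c * (\<Sum>v\<in>V - fst (gw len). p v)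
             \<le> c * (tlen len T' + (\<Sum>v\<in>V - fst T'. p v))))"

type_synonym 'a ps_state = "real \<times> real \<times> ('a set \<times> 'a set set)"

definition ps_init :: "'a set set \<Rightarrow> ('a \<Rightarrow> real) \<Rightarrow> ('a set \<Rightarrow> real) \<Rightarrow> real \<Rightarrow>
    ('a set \<times> 'a set set) \<Rightarrow> 'a ps_state" where
  "ps_init E p lam c T0 =
     (c * tp p T0 / tlen lam T0,
      Max {p v / lam e | v e. e \<in> E \<and> v \<in> e},
      T0)"

definition ps_continue :: "real \<Rightarrow> 'a ps_state \<Rightarrow> bool" where
  "ps_continue \<epsilon> s \<longleftrightarrow> fst (snd s) > (1 + \<epsilon>) * fst s"

definition ps_step :: "('a \<Rightarrow> real) \<Rightarrow> ('a set \<Rightarrow> real) \<Rightarrow> real \<Rightarrow> real \<Rightarrow>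
    (('a set \<Rightarrow> real) \<Rightarrow> ('a set \<times> 'a set set)) \<Rightarrow> 'a ps_state \<Rightarrow> 'a ps_state" where
  "ps_step p lam c \<epsilon> gw s =
     (case s of (\<alpha>, \<beta>, Ts) \<Rightarrow>
       if \<beta> > (1 + \<epsilon>) * \<alpha> then
         (let \<rho> = (\<alpha> + \<beta>) / 2; T = gw (\<lambda>e. \<rho> * lam e) in
          if c * tp p T \<le> \<rho> * tlen lam T then (\<alpha>, \<rho>, Ts)
          else (c * density p lam T, \<beta>, T))
       else s)"

end

theory Submission
  imports Defs
begin

lemma conn_inj:
  assumes G: "connected_graph VT ET" and rV: "r \<in> VT"
  shows "\<exists>f. inj_on f (VT - {r}) \<and> (\<forall>v\<in>VT-{r}. f v \<in> ET \<and> v \<in> f v)"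
proof -
  define R where "R = adj_rel ET"
  define d where "d v = (LEAST n. (r,v) \<in> R^^n)" for v
  have par: "\<exists>u. (u,v) \<in> R \<and> d u < d v" if v: "v \<in> VT" "v \<noteq> r" for v
  proof -
    have "(r,v) \<in> R\<^sup>*" using G rV v unfolding connected_graph_def R_def by simp
    then obtain n where "(r,v) \<in> R^^n" using rtrancl_power by blast
    then have dv: "(r,v) \<in> R^^(d v)" unfolding d_def by (rule LeastI)
    have "d v \<noteq> 0" proof assume "d v = 0" with dv v show False by simp qed
    then obtain m where m: "d v = Suc m" using not0_implies_Suc by blast
    with dv obtain u where u: "(r,u) \<in> R^^m" "(u,v) \<in> R" by auto
    have "d u \<le> m" unfolding d_def using u(1) by (rule Least_le)
    with u m show ?thesis by auto
  qed
  define pr where "pr v = (SOME u. (u,v) \<in> R \<and> d u < d v)" for v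
  have prp: "(pr v, v) \<in> R \<and> d (pr v) < d v" if "v \<in> VT - {r}" for v
  proof -
    have "\<exists>u. (u,v) \<in> R \<and> d u < d v" using par[of v] that by auto
    then show ?thesis unfolding pr_def by (rule someI_ex)
  qed
  define f where "f v = {pr v, v}" for v
  have "inj_on f (VT - {r})"
  proof (rule inj_onI)
    fix v w assume a: "v \<in> VT - {r}" "w \<in> VT - {r}" "f v = f w"
    show "v = w"
    proof (rule ccontr)
      assume "v \<noteq> w"
      from a(3) have "{pr v, v} = {pr w, w}" unfolding f_def by (simp only:)
      then have "(pr v = pr w \<and> v = w) \<or> (pr v = w \<and> v = pr w)" by (simp only: doubleton_eq_iff)
      with \<open>v \<noteq> w\<close> have e1: "v = pr w" and e2: "w = pr v" by blast+
      have "d w < d v" using prp[OF a(1)] e2 by (simp only:)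
      moreover have "d v < d w" using prp[OF a(2)] e1 by (simp only:)
      ultimately show False by simp
    qed
  qed
  moreover have "\<forall>v\<in>VT-{r}. f v \<in> ET \<and> v \<in> f v"
  proof
    fix v assume "v \<in> VT - {r}"
    then have "(pr v, v) \<in> R" using prp by blast
    then show "f v \<in> ET \<and> v \<in> f v" unfolding f_def R_def adj_rel_def by simp
  qed
  ultimately show ?thesis by blast
qed

lemma tree_bound:
  fixes p :: "'a \<Rightarrow> real" and lam :: "'a set \<Rightarrow> real"
  assumes T: "T \<in> rooted_subtrees V E r" and finE: "finite E"
    and pr: "p r = 0" and lam0: "\<forall>e\<in>E. lam e \<ge> 0" and b0: "\<beta> \<ge> 0"
    and bnd: "\<forall>e\<in>E. \<forall>v\<in>e. p v \<le> \<beta> * lam e"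
  shows "tp p T \<le> \<beta> * tlen lam T"
proof -
  obtain VT ET where T': "T = (VT, ET)" by force
  have sub: "VT \<subseteq> V" "ET \<subseteq> E" "r \<in> VT" and G: "connected_graph VT ET"
    using T unfolding T' rooted_subtrees_def is_tree_def by auto
  have finV: "finite VT" using G unfolding connected_graph_def simple_graph_def by simp
  have finET: "finite ET" using sub finE finite_subset by blast
  obtain f where f: "inj_on f (VT - {r})" "\<forall>v\<in>VT-{r}. f v \<in> ET \<and> v \<in> f v"
    using conn_inj[OF G sub(3)] by blast
  have "tp p T = (\<Sum>v\<in>VT-{r}. p v)"
    unfolding T' tp_def using sum.remove[OF finV sub(3), of p] pr by simp
  also have "\<dots> \<le> (\<Sum>v\<in>VT-{r}. \<beta> * lam (f v))"
  proof (rule sum_mono)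
    fix v assume v: "v \<in> VT - {r}"
    then have "f v \<in> E" "v \<in> f v" using f(2) sub(2) by auto
    then show "p v \<le> \<beta> * lam (f v)" using bnd by blast
  qed
  also have "\<dots> = (\<Sum>e\<in>f ` (VT-{r}). \<beta> * lam e)"
    using sum.reindex[OF f(1), of "\<lambda>e. \<beta> * lam e"] by simp
  also have "\<dots> \<le> (\<Sum>e\<in>ET. \<beta> * lam e)"
  proof (rule sum_mono2[OF finET])
    show "f ` (VT - {r}) \<subseteq> ET" using f(2) by blast
    show "0 \<le> \<beta> * lam e" if "e \<in> ET - f ` (VT - {r})" for e
      using that sub(2) lam0 b0 by (simp add: subset_iff)
  qed
  also have "\<dots> = \<beta> * tlen lam T"
    unfolding T' tlen_def by (simp add: sum_distrib_left)
  finally show ?thesis .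
qed

theorem proposition1:
  fixes V :: "'a set" and E :: "'a set set" and r :: 'a
    and p :: "'a \<Rightarrow> real" and lam :: "'a set \<Rightarrow> real" and \<epsilon> :: real
    and gw :: "('a set \<Rightarrow> real) \<Rightarrow> ('a set \<times> 'a set set)"
    and T0 :: "'a set \<times> 'a set set" and k :: nat
  defines "n \<equiv> card (V - {r})"
  defines "c \<equiv> 2 - 1 / real n"
  assumes G: "connected_graph V E" and rV: "r \<in> V"
    and p_range: "\<forall>v\<in>V. 0 \<le> p v \<and> p v \<le> 1"
    and p_root: "p r = 0"
    and p_sum: "(\<Sum>v\<in>V. p v) = 1"
    and lam_pos: "\<forall>e\<in>E. lam e > 0"
    and eps: "\<epsilon> > 0"
    and GW: "gw_guarantee V E r p c gw"
    and T0: "T0 \<in> rooted_subtrees V E r" "tlen lam T0 > 0"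
    and stop: "\<not> ps_continue \<epsilon> ((ps_step p lam c \<epsilon> gw ^^ k) (ps_init E p lam c T0))"
  shows "max_density V E r p lam
           \<le> (1 + \<epsilon>) * c * density p lam (snd (snd ((ps_step p lam c \<epsilon> gw ^^ k) (ps_init E p lam c T0))))"
proof -
  define RS where "RS = rooted_subtrees V E r"
  have SG: "simple_graph V E" using G unfolding connected_graph_def by simp
  have finV: "finite V" using SG unfolding simple_graph_def by simp
  have EP: "E \<subseteq> Pow V"
  proof
    fix e assume "e \<in> E"
    then obtain u v where "e = {u,v}" "u \<in> V" "v \<in> V" using SG unfolding simple_graph_def by blast
    then show "e \<in> Pow V" by simp
  qed
  have finE: "finite E" using EP finV by (meson finite_Pow_iff finite_subset)
  have c1: "c \<ge> 1"
  proof (cases "n = 0")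
    case True then show ?thesis unfolding c_def by simp
  next
    case False
    then have "1 / real n \<le> 1" by simp
    then show ?thesis unfolding c_def by simp
  qed
  have RSsub: "fst T \<subseteq> V" "snd T \<subseteq> E" if "T \<in> RS" for T
    using that unfolding RS_def rooted_subtrees_def by auto
  have tp0: "tp p T \<ge> 0" if "T \<in> RS" for T
    unfolding tp_def using RSsub[OF that] p_range by (intro sum_nonneg) blast
  have tl0: "tlen lam T \<ge> 0" if "T \<in> RS" for T
    unfolding tlen_def using RSsub[OF that] lam_pos by (intro sum_nonneg) (meson less_imp_le subsetD)
  have dens0: "density p lam T \<ge> 0" if "T \<in> RS" for T
    unfolding density_def using tp0[OF that] tl0[OF that] by simp
  define B where "B = {p v / lam e | v e. e \<in> E \<and> v \<in> e}"
  have Bfin: "finite B"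
  proof -
    have "B \<subseteq> (\<lambda>(v,e). p v / lam e) ` (V \<times> E)" unfolding B_def
    proof (safe)
      fix v e assume "e \<in> E" "v \<in> e"
      then have "(v,e) \<in> V \<times> E" using EP by auto
      then show "p v / lam e \<in> (\<lambda>(v,e). p v / lam e) ` (V \<times> E)"
        by (rule rev_image_eqI) simp
    qed
    moreover have "finite ((\<lambda>(v,e). p v / lam e) ` (V \<times> E))" using finV finE by simp
    ultimately show ?thesis by (rule finite_subset)
  qed
  define \<beta>0 where "\<beta>0 = Max B"
  have bnd0: "\<forall>e\<in>E. \<forall>v\<in>e. p v \<le> \<beta>0 * lam e"
  proof (intro ballI)
    fix e v assume ev: "e \<in> E" "v \<in> e"
    then have "p v / lam e \<in> B" unfolding B_def by blast
    then have "p v / lam e \<le> \<beta>0" unfolding \<beta>0_def using Bfin by simp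
    moreover have "lam e > 0" using lam_pos ev by blast
    ultimately show "p v \<le> \<beta>0 * lam e" by (simp add: divide_le_eq mult.commute)
  qed
  obtain VT0 ET0 where T0': "T0 = (VT0, ET0)" by force
  have "ET0 \<noteq> {}" using T0(2) unfolding T0' tlen_def by auto
  then obtain e0 where e0: "e0 \<in> ET0" by blast
  have e0E: "e0 \<in> E" using RSsub[of T0] T0(1) e0 unfolding RS_def T0' by auto
  then obtain u0 v0 where uv: "e0 = {u0,v0}" "u0 \<in> V" using SG unfolding simple_graph_def by blast
  have "p u0 / lam e0 \<in> B" unfolding B_def using e0E uv by blast
  then have "p u0 / lam e0 \<le> \<beta>0" unfolding \<beta>0_def using Bfin by simp
  moreover have "p u0 / lam e0 \<ge> 0" using p_range uv lam_pos e0E by (simp add: less_imp_le)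
  ultimately have b00: "\<beta>0 \<ge> 0" by linarith
  define Inv :: "'a ps_state \<Rightarrow> bool" where
    "Inv s = (case s of (\<alpha>, \<beta>, Ts) \<Rightarrow> \<alpha> = c * density p lam Ts \<and> \<alpha> \<ge> 0 \<and>
        (\<forall>T\<in>RS. tp p T \<le> \<beta> * tlen lam T))" for s
  have inv0: "Inv (ps_init E p lam c T0)"
  proof -
    have "\<forall>T\<in>RS. tp p T \<le> \<beta>0 * tlen lam T"
      using tree_bound[OF _ finE p_root _ b00 bnd0] lam_pos unfolding RS_def
      by (meson less_imp_le)
    moreover have "c * density p lam T0 \<ge> 0"
      using c1 dens0[of T0] T0(1) unfolding RS_def by simp
    ultimately show ?thesis unfolding Inv_def ps_init_def B_def[symmetric] \<beta>0_def[symmetric]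
      by (simp add: density_def)
  qed
  have step: "Inv (ps_step p lam c \<epsilon> gw s)" if I: "Inv s" for s
  proof -
    obtain \<alpha> \<beta> Ts where s: "s = (\<alpha>, \<beta>, Ts)" by (cases s) auto
    have Is: "\<alpha> = c * density p lam Ts" "\<alpha> \<ge> 0" "\<forall>T\<in>RS. tp p T \<le> \<beta> * tlen lam T"
      using I unfolding s Inv_def by auto
    show ?thesis
    proof (cases "\<beta> > (1 + \<epsilon>) * \<alpha>")
      case False
      then show ?thesis using I unfolding s ps_step_def by simp
    next
      case True
      define \<rho> where "\<rho> = (\<alpha> + \<beta>) / 2"
      define T where "T = gw (\<lambda>e. \<rho> * lam e)"
      have "(1 + \<epsilon>) * \<alpha> \<ge> 0" using Is(2) eps by simp
      then have "\<beta> > 0" using True by linarith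
      then have \<rho>0: "\<rho> > 0" unfolding \<rho>_def using Is(2) by simp
      have lenpos: "\<forall>e\<in>E. \<rho> * lam e > 0" using \<rho>0 lam_pos by simp
      have gwall: "T \<in> RS \<and> (\<forall>T'\<in>RS. tlen (\<lambda>e. \<rho> * lam e) T + c * (\<Sum>v\<in>V - fst T. p v)
             \<le> c * (tlen (\<lambda>e. \<rho> * lam e) T' + (\<Sum>v\<in>V - fst T'. p v)))"
        using spec[OF GW[unfolded gw_guarantee_def], where x="\<lambda>e. \<rho> * lam e"] lenpos
        unfolding T_def RS_def by blast
      have TRS: "T \<in> RS" and gwb: "\<forall>T'\<in>RS. tlen (\<lambda>e. \<rho> * lam e) T + c * (\<Sum>v\<in>V - fst T. p v)
             \<le> c * (tlen (\<lambda>e. \<rho> * lam e) T' + (\<Sum>v\<in>V - fst T'. p v))"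
        using gwall by blast+
      have tl_sc: "tlen (\<lambda>e. \<rho> * lam e) X = \<rho> * tlen lam X" for X
        unfolding tlen_def by (simp add: sum_distrib_left)
      have rest: "(\<Sum>v\<in>V - fst X. p v) = 1 - tp p X" if "X \<in> RS" for X
        using sum_diff[OF finV RSsub(1)[OF that], of p] p_sum unfolding tp_def by simp
      have key: "\<rho> * tlen lam T + c * (1 - tp p T) \<le> c * (\<rho> * tlen lam T' + (1 - tp p T'))"
        if "T' \<in> RS" for T'
        using gwb that TRS rest tl_sc by metis
      show ?thesis
      proof (cases "c * tp p T \<le> \<rho> * tlen lam T")
        case True2: True
        have "\<forall>T'\<in>RS. tp p T' \<le> \<rho> * tlen lam T'"
        proof
          fix T' assume T': "T' \<in> RS"
          have "c * (tp p T' - \<rho> * tlen lam T') \<le> c * tp p T - \<rho> * tlen lam T"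
            using key[OF T'] by (simp add: algebra_simps)
          also have "\<dots> \<le> 0" using True2 by simp
          finally have "c * (tp p T' - \<rho> * tlen lam T') \<le> 0" .
          then have "tp p T' - \<rho> * tlen lam T' \<le> 0" using c1
            by (simp add: mult_le_0_iff)
          then show "tp p T' \<le> \<rho> * tlen lam T'" by simp
        qed
        moreover have "ps_step p lam c \<epsilon> gw s = (\<alpha>, \<rho>, Ts)"
          using True True2 unfolding s ps_step_def prod.case Let_def \<rho>_def[symmetric] T_def[symmetric] by simp
        ultimately show ?thesis using Is unfolding Inv_def by simp
      next
        case False2: False
        have "c * density p lam T \<ge> 0" using c1 dens0[OF TRS] by simp
        moreover have "ps_step p lam c \<epsilon> gw s = (c * density p lam T, \<beta>, T)"
          using True False2 unfolding s ps_step_def prod.case Let_def \<rho>_def[symmetric] T_def[symmetric] by simp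
        ultimately show ?thesis using Is unfolding Inv_def by simp
      qed
    qed
  qed
  have invk: "Inv ((ps_step p lam c \<epsilon> gw ^^ j) (ps_init E p lam c T0))" for j
    by (induction j) (use inv0 step in auto)
  obtain \<alpha> \<beta> Ts where sk: "(ps_step p lam c \<epsilon> gw ^^ k) (ps_init E p lam c T0) = (\<alpha>, \<beta>, Ts)"
    by (metis prod_cases3)
  have Is: "\<alpha> = c * density p lam Ts" "\<forall>T\<in>RS. tp p T \<le> \<beta> * tlen lam T"
    using invk[of k] unfolding sk Inv_def by auto
  have stopk: "\<beta> \<le> (1 + \<epsilon>) * \<alpha>" using stop unfolding sk ps_continue_def by simp
  define S where "S = {density p lam T | T. T \<in> rooted_subtrees V E r \<and> tlen lam T > 0}"
  have "RS \<subseteq> Pow V \<times> Pow E"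
  proof
    fix X assume "X \<in> RS"
    then show "X \<in> Pow V \<times> Pow E" using RSsub[of X] by (cases X) simp
  qed
  then have "finite RS" using finV finE by (meson finite_Pow_iff finite_SigmaI finite_subset)
  moreover have "S \<subseteq> density p lam ` RS" unfolding S_def RS_def by blast
  ultimately have Sfin: "finite S" using finite_surj by blast
  have Sne: "S \<noteq> {}" unfolding S_def using T0 by blast
  have "\<forall>x\<in>S. x \<le> \<beta>"
  proof
    fix x assume "x \<in> S"
    then obtain T where T: "T \<in> RS" "tlen lam T > 0" "x = density p lam T" unfolding S_def RS_def by blast
    then have "tp p T \<le> \<beta> * tlen lam T" using Is(2) by blast
    then show "x \<le> \<beta>" using T by (simp add: density_def divide_le_eq)
  qed
  then have "max_density V E r p lam \<le> \<beta>" unfolding max_density_def S_def[symmetric]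
    using Sfin Sne by simp
  also have "\<dots> \<le> (1 + \<epsilon>) * \<alpha>" by (rule stopk)
  finally show ?thesis unfolding sk using Is(1) by (simp add: mult.assoc)
qed



end
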